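(* Let $\widetilde{\bm{A}}\in\mathbb{C}^{N\times N}$, let $\widetilde{\bm{c}}\in\mathbb{C}^{N}$ be nonzero, and let $h_i\in\mathbb{R}_{>0}$. Let $\bm{V}_{m+1}=[\bm{v}_1,\dots,\bm{v}_{m+1}]$, $\bm{H}_m$, $\bm{K}_m$ and $h_{m+1,m}$ come from a rational Arnoldi decomposition of $\widetilde{\bm{A}}$ with starting vector $\widetilde{\bm{c}}$ (as described in the context), in which the pole of the final iteration is $\xi_{m-1}=\infty$, so that $\bm{K}_m$ is invertible and the rational Krylov relation $$\widetilde{\bm{A}}\bm{V}_m = \bm{V}_m \bm{H}_m \bm{K}_m^{-1} + h_{m+1,m}\, \bm{v}_{m+1} \bm{e}_m^\ast \bm{K}_m^{-1}$$ holds. Then the error of the rational Krylov approximation $\|\widetilde{\bm{c}}\|_2 \bm{V}_m e^{h_i \bm{H}_m\bm{K}_m^{-1}} \bm{e}_1$ to $e^{h_i \widetilde{\bm{A}}}\widetilde{\bm{c}}$ is given by $$e^{h_i \widetilde{\bm{A}}}\widetilde{\bm{c}} - \|\widetilde{\bm{c}}\|_2 \bm{V}_m e^{h_i \bm{H}_m\bm{K}_m^{-1}} \bm{e}_1 = h_i \|\widetilde{\bm{c}}\|_2\, h_{m+1,m} \sum_{k=1}^\infty \left(\bm{e}_m^\ast \bm{K}_m^{-1} \varphi_k(h_i \bm{H}_m\bm{K}_m^{-1}) \bm{e}_1\right) (h_i \widetilde{\bm{A}})^{k-1} \bm{v}_{m+1}.$$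
   Context: The $\varphi$-functions are defined by $\varphi_0(z)=e^z$ and $\varphi_{k}(z)=\sum_{j=0}^\infty \frac{z^j}{(j+k)!}$ for $k\ge 1$; equivalently $\varphi_{k+1}(z)=\frac{\varphi_k(z)-\varphi_k(0)}{z}$ with $\varphi_k(0)=1/k!$; they are applied to square matrices via their power series. The rational Krylov subspace of size $m$ with poles $\xi_1,\dots,\xi_{m-1}\in\mathbb{C}\cup\{\infty\}$ (none equal to an eigenvalue of $\widetilde{\bm{A}}$) is $\mathcal{Q}_m(\widetilde{\bm{A}},\widetilde{\bm{c}})=q_{m-1}(\widetilde{\bm{A}})^{-1}\mathrm{span}\{\widetilde{\bm{c}},\widetilde{\bm{A}}\widetilde{\bm{c}},\dots,\widetilde{\bm{A}}^{m-1}\widetilde{\bm{c}}\}$ with $q_{m-1}(z)=\prod_{j=1}^{m-1}(1-z/\xi_j)$ (factors with $\xi_j=\infty$ are $1$). The rational Arnoldi algorithm produces orthonormal vectors $\bm{v}_1=\widetilde{\bm{c}}/\|\widetilde{\bm{c}}\|_2,\bm{v}_2,\dots,\bm{v}_{m+1}$ (so $\bm{V}_m=[\bm{v}_1,\dots,\bm{v}_m]$ is an orthonormal basis of $\mathcal{Q}_m$ and $\bm{V}_m\bm{e}_1=\widetilde{\bm{c}}/\|\widetilde{\bm{c}}\|_2$) satisfying $\widetilde{\bm{A}}\bm{V}_{m+1}\underline{\bm{K}_m}=\bm{V}_{m+1}\underline{\bm{H}_m}$, where $\underline{\bm{H}_m}=\begin{pmatrix}\bm{H}_m\\ h_{m+1,m}\bm{e}_m^\ast\end{pmatrix}$,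 $\underline{\bm{K}_m}=\begin{pmatrix}\bm{I}_m+\bm{H}_m\bm{D}_m\\ h_{m+1,m}\xi_m^{-1}\bm{e}_m^\ast\end{pmatrix}$, $\bm{D}_m=\mathrm{diag}(\xi_1^{-1},\dots,\xi_m^{-1})$ (with $\infty^{-1}=0$), $\bm{H}_m,\bm{K}_m=\bm{I}_m+\bm{H}_m\bm{D}_m\in\mathbb{C}^{m\times m}$, $h_{m+1,m}\in\mathbb{C}$, and $\bm{e}_1,\bm{e}_m$ are the first and $m$th unit vectors in $\mathbb{C}^m$. With the final pole infinite this yields the relation stated in the claim. *)

theory Defs
  imports "HOL-Analysis.Analysis"
begin

definition smat :: "'a::times \<Rightarrow> 'a^'n^'m \<Rightarrow> 'a^'n^'m" where
  "smat a M = (\<chi> i j. a * M $ i $ j)"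

fun mat_pow :: "'a::semiring_1^'n^'n \<Rightarrow> nat \<Rightarrow> 'a^'n^'n" where
  "mat_pow M 0 = mat 1"
| "mat_pow M (Suc j) = M ** mat_pow M j"

definition mat_exp :: "complex^'n^'n \<Rightarrow> complex^'n^'n" where
  "mat_exp M = (\<Sum>j. smat (1 / of_nat (fact j) :: complex) (mat_pow M j))"

definition phi :: "nat \<Rightarrow> complex^'n^'n \<Rightarrow> complex^'n^'n" where
  "phi k M = (\<Sum>j. smat (1 / of_nat (fact (j + k)) :: complex) (mat_pow M j))"

definition cinner :: "complex^'n \<Rightarrow> complex^'n \<Rightarrow> complex" where
  "cinner x y = (\<Sum>i\<in>UNIV. x $ i * cnj (y $ i))"

definition outer :: "complex^'n \<Rightarrow> complex^'m \<Rightarrow> complex^'m^'n" where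
  "outer x y = (\<chi> i j. x $ i * y $ j)"

definition idx_first :: "'m::{finite,wellorder}" where "idx_first = Min UNIV"
definition idx_last :: "'m::{finite,wellorder}" where "idx_last = Max UNIV"

definition e_first :: "complex^'m::{finite,wellorder}" where "e_first = axis idx_first 1"
definition e_last :: "complex^'m::{finite,wellorder}" where "e_last = axis idx_last 1"

text \<open>Poles in C \<union> {\<infinity>}: None = \<infinity>; inverse with \<infinity>^{-1} = 0.\<close>
definition pole_inv :: "complex option \<Rightarrow> complex" where
  "pole_inv p = (case p of None \<Rightarrow> 0 | Some z \<Rightarrow> inverse z)"

definition diag_mat :: "('m \<Rightarrow> complex) \<Rightarrow> complex^'m^'m" where
  "diag_mat d = (\<chi> i j. if i = j then d i else 0)"

end

theory Submission
  imports Defs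
begin



definition l1v :: "complex^'n \<Rightarrow> real" where "l1v x = (\<Sum>i\<in>UNIV. norm (x $ i))"
definition L :: "complex^'n^'m \<Rightarrow> real" where "L M = (\<Sum>i\<in>UNIV. \<Sum>j\<in>UNIV. norm (M $ i $ j))"

lemma norm_le_l1v: "norm x \<le> l1v x"
  unfolding norm_vec_def l1v_def by (rule L2_set_le_sum) auto

lemma l1v_nonneg: "0 \<le> l1v x" unfolding l1v_def by (simp add: sum_nonneg)
lemma L_nonneg: "0 \<le> L x" unfolding L_def by (simp add: sum_nonneg)

lemma norm_le_L: "norm M \<le> L M"
proof -
  have "norm M \<le> (\<Sum>i\<in>UNIV. norm (M $ i))"
    unfolding norm_vec_def by (rule L2_set_le_sum) auto
  also have "\<dots> \<le> (\<Sum>i\<in>UNIV. l1v (M $ i))" by (intro sum_mono norm_le_l1v)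
  finally show ?thesis by (simp add: L_def l1v_def)
qed

lemma l1v_mult: "l1v (M *v x) \<le> L M * l1v x"
proof -
  have "l1v (M *v x) = (\<Sum>i\<in>UNIV. norm (\<Sum>j\<in>UNIV. M$i$j * x$j))"
    by (simp add: l1v_def matrix_vector_mult_def)
  also have "\<dots> \<le> (\<Sum>i\<in>UNIV. \<Sum>j\<in>UNIV. norm (M$i$j) * l1v x)"
  proof (intro sum_mono)
    fix i
    have "norm (\<Sum>j\<in>UNIV. M$i$j * x$j) \<le> (\<Sum>j\<in>UNIV. norm (M$i$j * x$j))" by (rule norm_sum)
    also have "\<dots> \<le> (\<Sum>j\<in>UNIV. norm (M$i$j) * l1v x)"
    proof (intro sum_mono)
      fix j
      have "norm (x$j) \<le> l1v x" unfolding l1v_def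
        by (rule member_le_sum) auto
      then show "norm (M$i$j * x$j) \<le> norm (M$i$j) * l1v x"
        by (simp add: norm_mult mult_left_mono)
    qed
    finally show "norm (\<Sum>j\<in>UNIV. M$i$j * x$j) \<le> (\<Sum>j\<in>UNIV. norm (M$i$j) * l1v x)" .
  qed
  also have "\<dots> = L M * l1v x" by (simp add: L_def sum_distrib_right)
  finally show ?thesis .
qed

lemma mat_pow_vec: "mat_pow M (Suc k) *v x = M *v (mat_pow M k *v x)"
  by (simp add: matrix_vector_mul_assoc)

lemma l1v_pow: "l1v (mat_pow M k *v x) \<le> L M ^ k * l1v x"
proof (induction k)
  case 0 then show ?case by simp
next
  case (Suc k)
  have "l1v (mat_pow M (Suc k) *v x) \<le> L M * l1v (mat_pow M k *v x)"
    unfolding mat_pow_vec by (rule l1v_mult)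
  also have "\<dots> \<le> L M * (L M ^ k * l1v x)" by (intro mult_left_mono Suc L_nonneg)
  finally show ?case by (simp add: mult_ac)
qed

lemma entry_as_vec: "X $ i $ j = (X *v axis j 1) $ i"
  by (simp add: matrix_vector_mult_def axis_def if_distrib sum.delta cong: if_cong)

lemma l1v_axis: "l1v (axis j (1::complex)) = 1"
  unfolding l1v_def axis_def by (simp add: sum.delta' if_distrib cong: if_cong)

lemma L_pow: "L (mat_pow M k) \<le> of_nat CARD('n) * L M ^ k" for M :: "complex^'n^'n"
proof -
  have "L (mat_pow M k) = (\<Sum>j\<in>UNIV. l1v (mat_pow M k *v axis j 1))"
    unfolding L_def l1v_def by (subst sum.swap) (simp add: entry_as_vec)
  also have "\<dots> \<le> (\<Sum>j\<in>(UNIV::'n set). L M ^ k)"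
    using l1v_pow[of M k] by (intro sum_mono) (metis l1v_axis mult.right_neutral)
  finally show ?thesis by simp
qed

lemma L_smat: "L (smat a X) = norm a * L X"
  by (simp add: L_def smat_def norm_mult sum_distrib_left)

lemma summable_series: "summable (\<lambda>j. smat (1 / of_nat (fact (j + k)) :: complex) (mat_pow (M::complex^'n^'n) j))"
proof (rule summable_comparison_test)
  show "\<exists>N. \<forall>n\<ge>N. norm (smat (1 / of_nat (fact (n + k)) :: complex) (mat_pow M n)) \<le> of_nat CARD('n) * (inverse (fact n) * L M ^ n)"
  proof (intro exI allI impI)
    fix n :: nat
    have f: "(fact n :: real) \<le> fact (n + k)" by (rule fact_mono) simp
    have "norm (smat (1 / of_nat (fact (n + k)) :: complex) (mat_pow M n)) \<le> L (smat (1 / of_nat (fact (n + k)) :: complex) (mat_pow M n))"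
      by (rule norm_le_L)
    also have "\<dots> = (1 / fact (n+k)) * L (mat_pow M n)" by (simp add: L_smat norm_divide)
    also have "\<dots> \<le> inverse (fact n) * (of_nat CARD('n) * L M ^ n)"
      apply (rule mult_mono)
      using f by (auto simp: field_simps L_pow L_nonneg)
    finally show "norm (smat (1 / of_nat (fact (n + k)) :: complex) (mat_pow M n)) \<le> of_nat CARD('n) * (inverse (fact n) * L M ^ n)"
      by (simp add: mult_ac)
  qed
  show "summable (\<lambda>n. of_nat CARD('n) * (inverse (fact n) * L M ^ n))"
    by (intro summable_mult summable_exp)
qed




lemma smat_mult_vec: "smat a X *v x = a *s (X *v x)"
  by (simp add: vec_eq_iff smat_def matrix_vector_mult_def vector_scalar_mult_def sum_distrib_left mult_ac)

lemma smult_scaleR_complex: "(r *\<^sub>R (x::complex^'n)) = (complex_of_real r) *s x"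
  by (simp add: vec_eq_iff scaleR_vec_def scaleR_conv_of_real vector_scalar_mult_def)

lemma bl_matvec: "bounded_linear (\<lambda>X::complex^'n^'m. X *v x)"
  apply (rule linear_conv_bounded_linear[THEN iffD1])
  apply (rule linearI)
   apply (simp add: matrix_vector_mult_add_rdistrib)
  apply (simp add: vec_eq_iff scaleR_vec_def matrix_vector_mult_def scaleR_conv_of_real sum_distrib_left mult_ac)
  done

lemma bl_vecmat: "bounded_linear (\<lambda>x::complex^'n. (M::complex^'n^'m) *v x)"
  apply (rule linear_conv_bounded_linear[THEN iffD1])
  apply (rule linearI)
   apply (simp add: matrix_vector_right_distrib)
  apply (simp add: smult_scaleR_complex vector_scalar_commute)
  done

lemma bl_comp: "bounded_linear (\<lambda>x::complex^'n. x $ i)"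
  by (rule bounded_linear_vec_nth)

lemma bl_smul: "bounded_linear (\<lambda>a::complex. a *s (u::complex^'n))"
  apply (rule linear_conv_bounded_linear[THEN iffD1])
  apply (rule linearI)
   apply (simp add: vector_sadd_rdistrib)
  apply (simp add: vec_eq_iff scaleR_vec_def scaleR_conv_of_real vector_scalar_mult_def)
  done

lemma phi_vec:
  "phi k M *v x = (\<Sum>j. (1 / of_nat (fact (j + k))) *s (mat_pow M j *v x))"
  "summable (\<lambda>j. (1 / of_nat (fact (j + k)) :: complex) *s (mat_pow M j *v x))"
proof -
  have s: "summable (\<lambda>j. smat (1 / of_nat (fact (j + k)) :: complex) (mat_pow M j))"
    by (rule summable_series)
  show "phi k M *v x = (\<Sum>j. (1 / of_nat (fact (j + k))) *s (mat_pow M j *v x))"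
    unfolding phi_def bounded_linear.suminf[OF bl_matvec s] smat_mult_vec ..
  show "summable (\<lambda>j. (1 / of_nat (fact (j + k)) :: complex) *s (mat_pow M j *v x))"
    using bounded_linear.summable[OF bl_matvec s] unfolding smat_mult_vec .
qed

lemma exp_vec:
  "mat_exp M *v x = (\<Sum>j. (1 / of_nat (fact j)) *s (mat_pow M j *v x))"
  "summable (\<lambda>j. (1 / of_nat (fact j) :: complex) *s (mat_pow M j *v x))"
  using phi_vec[of 0 M x] by (simp_all add: mat_exp_def phi_def)

lemma double_sum:
  fixes F :: "nat \<Rightarrow> nat \<Rightarrow> 'a::banach"
  assumes abs: "(\<lambda>(k,i). norm (F k i)) summable_on UNIV"
  shows "(\<Sum>n. \<Sum>i\<le>n. F (n-i) i) = (\<Sum>k. \<Sum>i. F k i)"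
proof -
  define Fp where "Fp = (\<lambda>(k,i). F k i)"
  have aFp: "(\<lambda>x. norm (Fp x)) summable_on UNIV" using abs by (simp add: Fp_def case_prod_unfold)
  have sFp: "Fp summable_on UNIV" by (rule abs_summable_summable[OF aFp])
  have sS: "(\<lambda>(k,i). F k i) summable_on Sigma UNIV (\<lambda>_. UNIV)"
    using sFp by (simp add: Fp_def)
  have row: "F k summable_on UNIV" for k
  proof -
    have "(\<lambda>(k,i). F k i) summable_on (Pair k ` UNIV)"
      by (rule summable_on_subset_banach[OF sS]) auto
    then have "((\<lambda>(k,i). F k i) \<circ> Pair k) summable_on UNIV"
      by (subst (asm) summable_on_reindex) (auto simp: inj_on_def)
    then show ?thesis by (simp add: o_def)
  qed
  have rowsum: "infsum (F k) UNIV = (\<Sum>i. F k i)" for k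
    using has_sum_imp_sums[OF has_sum_infsum[OF row[of k]]] by (simp add: sums_iff)
  have outer: "(\<lambda>k. infsum (\<lambda>i. Fp (k,i)) UNIV) summable_on UNIV"
    using summable_on_Sigma_banach[of "\<lambda>k i. Fp (k,i)" UNIV "\<lambda>_. UNIV"] sFp by simp
  have eq1: "infsum (\<lambda>k. infsum (\<lambda>i. Fp (k,i)) UNIV) UNIV = infsum Fp UNIV"
    using infsum_Sigma'_banach[of "\<lambda>k i. Fp (k,i)" UNIV "\<lambda>_. UNIV"] sFp by simp
  have eq1': "(\<Sum>k. \<Sum>i. F k i) = infsum Fp UNIV"
    using has_sum_imp_sums[OF has_sum_infsum[OF outer]] eq1 rowsum
    by (simp add: sums_iff Fp_def)
  define g where "g = (\<lambda>(n::nat,i::nat). (n-i, i))"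
  have bij: "bij_betw g (Sigma UNIV (\<lambda>n. {..n})) UNIV"
    unfolding g_def
    by (rule bij_betwI[where g="\<lambda>(k,i). (k+i, i)"]) auto
  have sG: "(\<lambda>x. Fp (g x)) summable_on Sigma UNIV (\<lambda>n. {..n})"
    using summable_on_reindex_bij_betw[OF bij, of Fp] sFp by simp
  have sG': "(\<lambda>(x,y). Fp (g (x,y))) summable_on Sigma UNIV (\<lambda>n. {..n})"
    using sG by (simp add: case_prod_unfold)
  have iG: "infsum (\<lambda>x. Fp (g x)) (Sigma UNIV (\<lambda>n. {..n})) = infsum Fp UNIV"
    using infsum_reindex_bij_betw[OF bij, of Fp] by simp
  have outer2: "(\<lambda>n. infsum (\<lambda>i. Fp (g (n,i))) {..n}) summable_on UNIV"
    using summable_on_Sigma_banach[of "\<lambda>n i. Fp (g (n,i))" UNIV "\<lambda>n. {..n}"] sG' by simp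
  have eq2: "infsum (\<lambda>n. infsum (\<lambda>i. Fp (g (n,i))) {..n}) UNIV = infsum Fp UNIV"
    using infsum_Sigma'_banach[of "\<lambda>n i. Fp (g (n,i))" UNIV "\<lambda>n. {..n}"] sG' iG by (simp add: case_prod_unfold)
  have "(\<Sum>n. \<Sum>i\<le>n. F (n-i) i) = infsum Fp UNIV"
    using has_sum_imp_sums[OF has_sum_infsum[OF outer2]] eq2
    by (simp add: sums_iff Fp_def g_def)
  with eq1' show ?thesis by simp
qed




lemma double_sum_summable:
  fixes F :: "nat \<Rightarrow> nat \<Rightarrow> 'a::banach"
  assumes abs: "(\<lambda>(k,i). norm (F k i)) summable_on UNIV"
  shows "summable (\<lambda>n. \<Sum>i\<le>n. F (n-i) i)"
proof -
  define Fp where "Fp = (\<lambda>(k,i). F k i)"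
  have aFp: "(\<lambda>x. norm (Fp x)) summable_on UNIV" using abs by (simp add: Fp_def case_prod_unfold)
  have sFp: "Fp summable_on UNIV" by (rule abs_summable_summable[OF aFp])
  define g where "g = (\<lambda>(n::nat,i::nat). (n-i, i))"
  have bij: "bij_betw g (Sigma UNIV (\<lambda>n. {..n})) UNIV"
    unfolding g_def
    by (rule bij_betwI[where g="\<lambda>(k,i). (k+i, i)"]) auto
  have sG: "(\<lambda>x. Fp (g x)) summable_on Sigma UNIV (\<lambda>n. {..n})"
    using summable_on_reindex_bij_betw[OF bij, of Fp] sFp by simp
  have sG': "(\<lambda>(x,y). Fp (g (x,y))) summable_on Sigma UNIV (\<lambda>n. {..n})"
    using sG by (simp add: case_prod_unfold)
  have outer2: "(\<lambda>n. infsum (\<lambda>i. Fp (g (n,i))) {..n}) summable_on UNIV"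
    using summable_on_Sigma_banach[of "\<lambda>n i. Fp (g (n,i))" UNIV "\<lambda>n. {..n}"] sG' by simp
  then show ?thesis
    using summable_on_imp_summable[OF outer2] by (simp add: Fp_def g_def)
qed

lemma prod_summable:
  fixes a c :: "nat \<Rightarrow> real"
  assumes "\<And>n. a n \<ge> 0" "\<And>n. c n \<ge> 0" "summable a" "summable c"
  shows "(\<lambda>(k,i). a k * c i) summable_on UNIV"
proof -
  have ca: "c summable_on UNIV" using assms summable_on_UNIV_nonneg_real_iff by blast
  have aa: "a summable_on UNIV" using assms summable_on_UNIV_nonneg_real_iff by blast
  have "(\<lambda>(k,i). a k * c i) summable_on Sigma UNIV (\<lambda>_. UNIV)"
  proof (rule summable_on_SigmaI[where g="\<lambda>k. a k * infsum c UNIV"])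
    show "((\<lambda>y. case (k, y) of (k, i) \<Rightarrow> a k * c i) has_sum a k * infsum c UNIV) UNIV" for k
      using has_sum_cmult_right[OF has_sum_infsum[OF ca], of "a k"] by simp
    show "(\<lambda>k. a k * infsum c UNIV) summable_on UNIV"
      by (rule summable_on_cmult_left[OF aa])
    show "\<And>x y. 0 \<le> (case (x, y) of (k, i) \<Rightarrow> a k * c i)" using assms by simp
  qed
  then show ?thesis by simp
qed

lemma fact_mult_le: "fact i * fact k \<le> (fact (i + Suc k) :: real)"
proof -
  have "fact i * fact k * ((i + k) choose i) = (fact (i + k) :: nat)"
    using binomial_fact_lemma[of i "i+k"] by simp
  moreover have "(i + k) choose i \<ge> 1" by (simp add: Suc_leI)
  ultimately have "fact i * fact k \<le> (fact (i + k) :: nat)"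
    by (metis le_square mult.right_neutral mult_le_mono2 order_trans mult_le_cancel1 nat_mult_le_cancel_disj)
  also have "\<dots> \<le> fact (i + Suc k)" by (rule fact_mono_nat) simp
  finally have "fact i * fact k \<le> (fact (i + Suc k) :: nat)" .
  then show ?thesis by (metis of_nat_fact of_nat_le_iff of_nat_mult)
qed

lemma l1v_smult: "l1v (a *s x) = norm a * l1v x"
  by (simp add: l1v_def vector_scalar_mult_def norm_mult sum_distrib_left)

lemma matvec_sum: "(M::complex^'n^'m) *v (\<Sum>i\<in>S. f i) = (\<Sum>i\<in>S. M *v f i)"
  by (induction S rule: infinite_finite_induct) (simp_all add: matrix_vector_right_distrib)

lemma smult_sum: "(a::complex) *s (\<Sum>i\<in>S. f i) = (\<Sum>i\<in>S. a *s (f i :: complex^'n))"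
  by (induction S rule: infinite_finite_induct) (simp_all add: vector_add_ldistrib)

lemma outer_e_last: "outer x (a *s e_last) *v z = (a * z $ idx_last) *s x"
proof -
  have "(\<Sum>j\<in>UNIV. x $ i * (a * (if j = idx_last then 1 else 0)) * z $ j) = a * z $ idx_last * x $ i" for i
  proof -
    have "(\<Sum>j\<in>UNIV. x $ i * (a * (if j = idx_last then 1 else 0)) * z $ j)
        = (\<Sum>j\<in>UNIV. if j = idx_last then x $ i * a * z $ j else 0)"
      by (intro sum.cong) auto
    also have "\<dots> = a * z $ idx_last * x $ i" by (simp add: mult_ac)
    finally show ?thesis .
  qed
  then show ?thesis
    by (simp add: vec_eq_iff outer_def matrix_vector_mult_def e_last_def axis_def vector_scalar_mult_def)
qed

lemma cinner_e_last: "cinner x e_last = x $ idx_last"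
  by (simp add: cinner_def e_last_def axis_def if_distrib sum.delta' cong: if_cong)

lemma outer_zero: "outer x 0 = 0"
  by (simp add: vec_eq_iff outer_def)

lemma bl_smul_vec: "bounded_linear (\<lambda>x::complex^'n. (a::complex) *s x)"
  apply (rule linear_conv_bounded_linear[THEN iffD1])
  apply (rule linearI)
   apply (simp add: vector_add_ldistrib)
  apply (simp add: vec_eq_iff scaleR_vec_def scaleR_conv_of_real vector_scalar_mult_def mult_ac)
  done




theorem theorem4p3:
  fixes A :: "complex^'n^'n" and c :: "complex^'n" and h :: real
    and V :: "((complex, 'm::{finite,wellorder}) vec, 'n) vec" and v :: "complex^'n"
    and H K :: "((complex, 'm) vec, 'm) vec" and hm :: complex and \<xi> :: "'m \<Rightarrow> complex option"
  assumes c_nz: "c \<noteq> 0"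
    and h_pos: "h > 0"
    and orth_V: "\<forall>i j. cinner (column i V) (column j V) = (if i = j then 1 else 0)"
    and orth_v: "\<forall>i. cinner v (column i V) = 0"
    and norm_v: "cinner v v = 1"
    and first_col: "column idx_first V = (1 / norm c) *\<^sub>R c"
    and K_def: "K = mat 1 + H ** diag_mat (\<lambda>j. pole_inv (\<xi> j))"
    and last_pole: "\<xi> idx_last = None"
    and arnoldi: "(A ** V) ** K + outer (A *v v) ((hm * pole_inv (\<xi> idx_last)) *s e_last)
                  = V ** H + outer v (hm *s e_last)"
    and K_inv: "invertible K"
  shows "mat_exp (smat (complex_of_real h) A) *v c
           - complex_of_real (norm c) *s (V *v (mat_exp (smat (complex_of_real h) (H ** matrix_inv K)) *v e_first))
         = (complex_of_real h * complex_of_real (norm c) * hm) *s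
             (\<Sum>k. cinner (matrix_inv K *v (phi (Suc k) (smat (complex_of_real h) (H ** matrix_inv K)) *v e_first)) e_last
                   *s (mat_pow (smat (complex_of_real h) A) k *v v))"
proof -
  define W where "W = smat (complex_of_real h) A"
  define Ki where "Ki = matrix_inv K"
  define G where "G = smat (complex_of_real h) (H ** Ki)"
  define b where "b i = (Ki *v (mat_pow G i *v e_first)) $ idx_last" for i
  define nc where "nc = complex_of_real (norm c)"
  define hh where "hh = complex_of_real h * hm"
  define F where "F k i = (b i / of_nat (fact (i + Suc k))) *s (mat_pow W k *v v)" for k i
  have KK: "K ** Ki = mat 1"
    using K_inv someI_ex[of "\<lambda>A'. K ** A' = mat 1 \<and> A' ** K = mat 1"]
    unfolding invertible_def Ki_def matrix_inv_def by blast
  have arn: "(A ** V) ** K = V ** H + outer v (hm *s e_last)"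
    using arnoldi last_pole by (simp add: pole_inv_def outer_zero)
  have R: "W *v (V *v y) = V *v (G *v y) + (hh * (Ki *v y) $ idx_last) *s v" for y
  proof -
    define z where "z = Ki *v y"
    have Kz: "K *v z = y" unfolding z_def by (simp add: matrix_vector_mul_assoc KK)
    have "A *v (V *v y) = ((A ** V) ** K) *v z"
      by (simp add: matrix_vector_mul_assoc[symmetric] Kz)
    also have "\<dots> = V *v (H *v z) + (hm * z $ idx_last) *s v"
      by (simp add: arn matrix_vector_mult_add_rdistrib outer_e_last matrix_vector_mul_assoc)
    finally have AV: "A *v (V *v y) = V *v (H *v z) + (hm * z $ idx_last) *s v" .
    have Gy: "G *v y = complex_of_real h *s (H *v z)"
      by (simp add: G_def smat_mult_vec z_def matrix_vector_mul_assoc)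
    show ?thesis
      by (simp add: W_def smat_mult_vec AV Gy vector_scalar_commute vector_add_ldistrib
          vector_smult_assoc hh_def z_def mult_ac)
  qed
  have P: "mat_pow W j *v (V *v e_first) = V *v (mat_pow G j *v e_first)
            + (\<Sum>i<j. (hh * b i) *s (mat_pow W (j - 1 - i) *v v))" for j
  proof (induction j)
    case 0 then show ?case by simp
  next
    case (Suc j)
    have "mat_pow W (Suc j) *v (V *v e_first) = W *v (mat_pow W j *v (V *v e_first))"
      by (rule mat_pow_vec)
    also have "\<dots> = W *v (V *v (mat_pow G j *v e_first))
            + (\<Sum>i<j. (hh * b i) *s (W *v (mat_pow W (j - 1 - i) *v v)))"
      by (simp add: Suc matrix_vector_right_distrib matvec_sum vector_scalar_commute)
    also have "(\<Sum>i<j. (hh * b i) *s (W *v (mat_pow W (j - 1 - i) *v v)))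
             = (\<Sum>i<j. (hh * b i) *s (mat_pow W (Suc j - 1 - i) *v v))"
    proof (intro sum.cong refl)
      fix i assume "i \<in> {..<j}"
      then have "Suc j - 1 - i = Suc (j - 1 - i)" by auto
      then show "(hh * b i) *s (W *v (mat_pow W (j - 1 - i) *v v)) = (hh * b i) *s (mat_pow W (Suc j - 1 - i) *v v)"
        by (simp add: matrix_vector_mul_assoc)
    qed
    also have "W *v (V *v (mat_pow G j *v e_first)) = V *v (mat_pow G (Suc j) *v e_first) + (hh * b j) *s (mat_pow W (Suc j - 1 - j) *v v)"
      unfolding R by (simp add: b_def matrix_vector_mul_assoc)
    finally show ?case by (simp add: add_ac)
  qed
  define x1 where "x1 = V *v e_first"
  have nc0: "norm c \<noteq> 0" using c_nz by simp
  have cV: "c = nc *s x1"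
  proof -
    have "V *v e_first = column idx_first V"
      unfolding column_def e_first_def by (simp add: vec_eq_iff entry_as_vec)
    then have "x1 = (1 / norm c) *\<^sub>R c"
      unfolding x1_def first_col by simp
    then have "nc *s x1 = (nc * complex_of_real (1 / norm c)) *s c"
      by (simp add: smult_scaleR_complex vector_smult_assoc)
    also have "nc * complex_of_real (1 / norm c) = 1" using nc0 by (simp add: nc_def field_simps)
    finally show ?thesis by simp
  qed
  have L1: "mat_exp W *v c - nc *s (V *v (mat_exp G *v e_first)) = nc *s (mat_exp W *v x1 - V *v (mat_exp G *v e_first))"
    by (subst cV) (simp add: vector_scalar_commute vector_ssub_ldistrib)
  define D where "D j = (1/of_nat (fact j) :: complex) *s (mat_pow W j *v x1) - (1/of_nat (fact j) :: complex) *s (V *v (mat_pow G j *v e_first))" for j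
  have S2: "V *v (mat_exp G *v e_first) = (\<Sum>j. (1/of_nat (fact j) :: complex) *s (V *v (mat_pow G j *v e_first)))"
    "summable (\<lambda>j. (1/of_nat (fact j) :: complex) *s (V *v (mat_pow G j *v e_first)))"
    using bounded_linear.suminf[OF bl_vecmat[of V] exp_vec(2)[of G e_first]]
      bounded_linear.summable[OF bl_vecmat[of V] exp_vec(2)[of G e_first]]
    by (simp_all add: exp_vec(1) vector_scalar_commute)
  have sumD: "D sums (mat_exp W *v x1 - V *v (mat_exp G *v e_first))"
    unfolding D_def exp_vec(1)[of W x1] S2(1)
    by (intro sums_diff summable_sums exp_vec(2) S2(2))
  have D0: "D 0 = 0" by (simp add: D_def x1_def)
  define Y where "Y n = (\<Sum>i\<le>n. F (n-i) i)" for n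
  have DS: "D (Suc n) = hh *s Y n" for n
  proof -
    have "D (Suc n) = (1/of_nat (fact (Suc n)) :: complex) *s (mat_pow W (Suc n) *v x1 - V *v (mat_pow G (Suc n) *v e_first))"
      by (simp add: D_def vector_ssub_ldistrib)
    also have "mat_pow W (Suc n) *v x1 - V *v (mat_pow G (Suc n) *v e_first) = (\<Sum>i<Suc n. (hh * b i) *s (mat_pow W (Suc n - 1 - i) *v v))"
      unfolding x1_def P[of "Suc n"] by (simp only: add_diff_cancel_left')
    also have "(1/of_nat (fact (Suc n)) :: complex) *s (\<Sum>i<Suc n. (hh * b i) *s (mat_pow W (Suc n - 1 - i) *v v))
       = (\<Sum>i<Suc n. ((1/of_nat (fact (Suc n))) * (hh * b i)) *s (mat_pow W (n - i) *v v))"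
      unfolding smult_sum vector_smult_assoc diff_Suc_1 ..
    also have "\<dots> = (\<Sum>i\<le>n. hh *s F (n-i) i)"
      unfolding lessThan_Suc_atMost
    proof (intro sum.cong refl)
      fix i assume "i \<in> {..n}"
      then have "i + Suc (n - i) = Suc n" by auto
      then show "((1/of_nat (fact (Suc n))) * (hh * b i)) *s (mat_pow W (n - i) *v v) = hh *s F (n-i) i"
        by (simp add: F_def vector_smult_assoc)
    qed
    finally show ?thesis by (simp add: Y_def smult_sum)
  qed
  have abs: "(\<lambda>(k,i). norm (F k i)) summable_on UNIV"
  proof -
    define a where "a k = l1v v * (inverse (fact k) * L W ^ k)" for k
    define cc where "cc i = (L Ki * l1v (e_first::complex^'m::{finite,wellorder})) * (inverse (fact i) * L G ^ i)" for i
    have a0: "a k \<ge> 0" for k by (simp add: a_def l1v_nonneg L_nonneg)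
    have c0: "cc k \<ge> 0" for k by (simp add: cc_def l1v_nonneg L_nonneg)
    have pr: "(\<lambda>(k,i). a k * cc i) summable_on UNIV"
      by (rule prod_summable[OF a0 c0]) (simp_all add: a_def cc_def summable_mult summable_exp)
    show ?thesis
    proof (rule summable_on_comparison_test[OF pr])
      fix x :: "nat \<times> nat"
      obtain k i where x: "x = (k,i)" by (cases x)
      have nb: "norm (b i) \<le> L Ki * (L G ^ i * l1v (e_first::complex^'m::{finite,wellorder}))"
      proof -
        have "norm (b i) \<le> l1v (Ki *v (mat_pow G i *v e_first))"
          unfolding b_def l1v_def by (rule member_le_sum) auto
        also have "\<dots> \<le> L Ki * l1v (mat_pow G i *v e_first)" by (rule l1v_mult)
        also have "\<dots> \<le> L Ki * (L G ^ i * l1v (e_first::complex^'m::{finite,wellorder}))"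
          by (intro mult_left_mono l1v_pow L_nonneg)
        finally show ?thesis .
      qed
      have fi: "1 / (fact (i + Suc k) :: real) \<le> inverse (fact i) * inverse (fact k)"
      proof -
        have p: "0 < (fact i * fact k :: real)" by simp
        have "1 / (fact (i + Suc k) :: real) \<le> 1 / (fact i * fact k)"
          by (rule divide_left_mono[OF fact_mult_le]) (simp_all add: p)
        then show ?thesis by (simp add: field_simps)
      qed
      have "norm (F k i) \<le> l1v (F k i)" by (rule norm_le_l1v)
      also have "\<dots> = (norm (b i) * (1 / fact (i + Suc k))) * l1v (mat_pow W k *v v)"
      proof -
        have nf: "norm (of_nat (fact (i + Suc k)) :: complex) = fact (i + Suc k)"
          unfolding norm_of_nat by (rule of_nat_fact)
        show ?thesis by (simp only: F_def l1v_smult norm_divide nf) simp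
      qed
      also have "\<dots> \<le> ((L Ki * (L G ^ i * l1v (e_first::complex^'m::{finite,wellorder}))) * (inverse (fact i) * inverse (fact k))) * (L W ^ k * l1v v)"
        by (intro mult_mono nb fi l1v_pow) (auto simp: L_nonneg l1v_nonneg)
      also have "\<dots> = a k * cc i" by (simp add: a_def cc_def mult_ac)
      finally show "(case x of (k, i) \<Rightarrow> norm (F k i)) \<le> (case x of (k, i) \<Rightarrow> a k * cc i)"
        by (simp add: x)
      show "0 \<le> (case x of (k, i) \<Rightarrow> norm (F k i))" by (simp add: x)
    qed
  qed
  have Ysum: "Y sums (\<Sum>n. Y n)"
  proof -
    have "summable Y" using double_sum_summable[OF abs] by (simp add: Y_def[abs_def])
    then show ?thesis by (rule summable_sums)
  qed
  have Yeq: "(\<Sum>n. Y n) = (\<Sum>k. \<Sum>i. F k i)"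
    using double_sum[OF abs] by (simp add: Y_def[abs_def])
  have tot: "mat_exp W *v x1 - V *v (mat_exp G *v e_first) = hh *s (\<Sum>n. Y n)"
  proof -
    have "(\<lambda>n. D (Suc n)) sums (mat_exp W *v x1 - V *v (mat_exp G *v e_first))"
      using sumD D0 by (simp add: sums_Suc_iff)
    moreover have "(\<lambda>n. D (Suc n)) sums (hh *s (\<Sum>n. Y n))"
      unfolding DS by (rule bounded_linear.sums[OF bl_smul_vec Ysum])
    ultimately show ?thesis by (rule sums_unique2)
  qed
  have RP: "cinner (Ki *v (phi (Suc k) G *v e_first)) e_last *s (mat_pow W k *v v) = (\<Sum>i. F k i)" for k
  proof -
    define T where "T j = (1 / of_nat (fact (j + Suc k)) :: complex) *s (mat_pow G j *v e_first)" for j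
    have sT: "summable T" unfolding T_def by (rule phi_vec(2))
    have sKT: "summable (\<lambda>j. Ki *v T j)" by (rule bounded_linear.summable[OF bl_vecmat sT])
    have sC: "summable (\<lambda>j. (Ki *v T j) $ idx_last)" by (rule bounded_linear.summable[OF bl_comp sKT])
    have "cinner (Ki *v (phi (Suc k) G *v e_first)) e_last = (\<Sum>j. (Ki *v T j) $ idx_last)"
      unfolding cinner_e_last phi_vec(1) T_def[symmetric]
        bounded_linear.suminf[OF bl_vecmat sT] bounded_linear.suminf[OF bl_comp sKT] ..
    then have "cinner (Ki *v (phi (Suc k) G *v e_first)) e_last *s (mat_pow W k *v v)
       = (\<Sum>j. (Ki *v T j) $ idx_last *s (mat_pow W k *v v))"
      using bounded_linear.suminf[OF bl_smul sC] by simp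
    also have "\<dots> = (\<Sum>j. F k j)"
      by (simp add: T_def F_def b_def vector_scalar_commute)
    finally show ?thesis .
  qed
  have "mat_exp W *v c - nc *s (V *v (mat_exp G *v e_first))
      = (complex_of_real h * nc * hm) *s (\<Sum>k. \<Sum>i. F k i)"
    unfolding L1 tot Yeq by (simp add: vector_smult_assoc hh_def mult_ac)
  also have "(\<Sum>k. \<Sum>i. F k i) = (\<Sum>k. cinner (Ki *v (phi (Suc k) G *v e_first)) e_last *s (mat_pow W k *v v))"
    by (simp add: RP)
  finally show ?thesis by (simp add: W_def G_def Ki_def nc_def)
qed


end
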